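(* Let $(M,g)$ be a semi-regular semi-Riemannian manifold. Then the Riemann curvature $R$ is a smooth tensor field of type $(0,4)$ on $M$, i.e. $R:\mathfrak{X}(M)^4\to C^\infty(M)$ is $C^\infty(M)$-linear in each of its four arguments and takes smooth values.
   Context: A singular semi-Riemannian manifold $(M,g)$ is a smooth $n$-manifold $M$ with a smooth symmetric bilinear form $g$ on $TM$, possibly degenerate and with signature possibly varying from point to point. $\mathfrak X(M)$ denotes smooth vector fields, $C^\infty(M)$ smooth functions. For $u\in T_pM$ let $u^\flat\in T_p^*M$, $u^\flat(v)=g(u,v)$. The radical is $T^\circ_pM=\{u\in T_pM: u^\flat=0\}$; the radical-annihilator space is $T^\bullet_pM=\{u^\flat:u\in T_pM\}\subseteq T^*_pM$ (the annihilator of $T^\circ_pM$). On $T^\bullet_pM$ there is a well-defined nondegenerate inner product $\langle\langle u^\flat,v^\flat\rangle\rangle:=g(u,v)$. $\mathcal A^\bullet(M)$ denotes the smooth $1$-forms $\omega$ with $\omega_p\in T^\bullet_pM$ for all $p$. The Koszul form is $\mathcal K(X,Y,Z)=\tfrac12\{Xg(Y,Z)+Yg(Z,X)-Zg(X,Y)-g(X,[Y,Z])+g(Y,[Z,X])+g(Z,[X,Y])\}$, and the lower covariant derivative is the $1$-form $\nabla^\flat_XY:=\mathcal K(X,Y,\cdot)$. $(M,g)$ is radical-stationary if $\nabla^\flat_XY\in\mathcal A^\bullet(M)$ for all $X,Y\in\mathfrak X(M)$. On a radical-stationary manifold, for $\omega\in\mathcal A^\bullet(M)$ and $X\in\mathfrak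 X(M)$, the covariant derivative $\nabla_X\omega$ is the section of $T^*M$ given by $(\nabla_X\omega)(Y)=X(\omega(Y))-\langle\langle\nabla^\flat_XY,\omega\rangle\rangle$ (evaluated pointwise). Let $\mathcal A^\bullet_d(M)=\{\omega\in\mathcal A^\bullet(M):\nabla_X\omega\in\mathcal A^\bullet(M)\text{ (in particular smooth) for all }X\in\mathfrak X(M)\}$. $(M,g)$ is semi-regular if $\nabla^\flat_XY\in\mathcal A^\bullet_d(M)$ for all $X,Y\in\mathfrak X(M)$ (semi-regular implies radical-stationary). The Riemann curvature is $R(X,Y,Z,T):=(\nabla_X(\nabla^\flat_YZ))(T)-(\nabla_Y(\nabla^\flat_XZ))(T)-(\nabla^\flat_{[X,Y]}Z)(T)$. *)

theory Defs
  imports "HOL-Analysis.Analysis"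
begin

text \<open>C-infinity: continuous, and all partial derivatives exist and are again C-infinity
  (greatest fixed point, i.e. partial derivatives of all orders exist and are continuous).\<close>
coinductive smooth_on :: "'e::euclidean_space set \<Rightarrow> ('e \<Rightarrow> real) \<Rightarrow> bool" for S where
  smooth_onI: "continuous_on S f \<Longrightarrow>
    (\<forall>i\<in>Basis. \<exists>f'. (\<forall>x\<in>S. ((\<lambda>t. f (x + t *\<^sub>R i)) has_real_derivative f' x) (at 0))
                      \<and> smooth_on S f') \<Longrightarrow> smooth_on S f"

definition smooth_map_on :: "'e::euclidean_space set \<Rightarrow> ('e \<Rightarrow> 'f::euclidean_space) \<Rightarrow> bool" where
  "smooth_map_on S h \<longleftrightarrow> (\<forall>i\<in>Basis. smooth_on S (\<lambda>x. h x \<bullet> i))"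

definition smooth_atlas :: "'a set \<Rightarrow> ('a set \<times> ('a \<Rightarrow> 'e::euclidean_space)) set \<Rightarrow> bool" where
  "smooth_atlas M A \<longleftrightarrow>
     (\<forall>(U,\<phi>)\<in>A. U \<subseteq> M \<and> inj_on \<phi> U \<and> open (\<phi> ` U)) \<and>
     M = \<Union>(fst ` A) \<and>
     (\<forall>(U,\<phi>)\<in>A. \<forall>(V,\<psi>)\<in>A. open (\<phi> ` (U \<inter> V)) \<and>
          smooth_map_on (\<phi> ` (U \<inter> V)) (\<psi> \<circ> inv_into U \<phi>))"

definition manifold_topology :: "'a set \<Rightarrow> ('a set \<times> ('a \<Rightarrow> 'e::euclidean_space)) set \<Rightarrow> 'a topology" where
  "manifold_topology M A = topology (\<lambda>W. W \<subseteq> M \<and> (\<forall>(U,\<phi>)\<in>A. open (\<phi> ` (W \<inter> U))))"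

definition smooth_manifold :: "'a set \<Rightarrow> ('a set \<times> ('a \<Rightarrow> 'e::euclidean_space)) set \<Rightarrow> bool" where
  "smooth_manifold M A \<longleftrightarrow> smooth_atlas M A \<and>
     Hausdorff_space (manifold_topology M A) \<and> second_countable (manifold_topology M A)"

definition smooth_funs :: "'a set \<Rightarrow> ('a set \<times> ('a \<Rightarrow> 'e::euclidean_space)) set \<Rightarrow> ('a \<Rightarrow> real) set" where
  "smooth_funs M A = {f. (\<forall>(U,\<phi>)\<in>A. smooth_on (\<phi> ` U) (f \<circ> inv_into U \<phi>)) \<and> (\<forall>p. p \<notin> M \<longrightarrow> f p = 0)}"

section \<open>Vector fields as derivations of C-infinity(M)\<close>

type_synonym 'a vf = "('a \<Rightarrow> real) \<Rightarrow> ('a \<Rightarrow> real)"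

definition vector_fields :: "'a set \<Rightarrow> ('a set \<times> ('a \<Rightarrow> 'e::euclidean_space)) set \<Rightarrow> 'a vf set" where
  "vector_fields M A = {D.
     (\<forall>f\<in>smooth_funs M A. D f \<in> smooth_funs M A) \<and>
     (\<forall>f. f \<notin> smooth_funs M A \<longrightarrow> D f = (\<lambda>_. 0)) \<and>
     (\<forall>f\<in>smooth_funs M A. \<forall>h\<in>smooth_funs M A. \<forall>a b::real.
         D (\<lambda>p. a * f p + b * h p) = (\<lambda>p. a * D f p + b * D h p)) \<and>
     (\<forall>f\<in>smooth_funs M A. \<forall>h\<in>smooth_funs M A.
         D (\<lambda>p. f p * h p) = (\<lambda>p. f p * D h p + h p * D f p))}"

definition vf_add :: "'a vf \<Rightarrow> 'a vf \<Rightarrow> 'a vf" where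
  "vf_add X Y = (\<lambda>h p. X h p + Y h p)"

definition vf_scale :: "('a \<Rightarrow> real) \<Rightarrow> 'a vf \<Rightarrow> 'a vf" where
  "vf_scale f X = (\<lambda>h p. f p * X h p)"

definition lie_bracket :: "'a vf \<Rightarrow> 'a vf \<Rightarrow> 'a vf" where
  "lie_bracket X Y = (\<lambda>h p. X (Y h) p - Y (X h) p)"

text \<open>A smooth symmetric (possibly degenerate) bilinear form on TM, as a symmetric
  C-infinity(M)-bilinear map on vector fields with smooth values.\<close>
definition smooth_sym_form :: "'a set \<Rightarrow> ('a set \<times> ('a \<Rightarrow> 'e::euclidean_space)) set \<Rightarrow>
    ('a vf \<Rightarrow> 'a vf \<Rightarrow> 'a \<Rightarrow> real) \<Rightarrow> bool" where
  "smooth_sym_form M A g \<longleftrightarrow>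
     (\<forall>X\<in>vector_fields M A. \<forall>Y\<in>vector_fields M A.
        g X Y \<in> smooth_funs M A \<and> g X Y = g Y X) \<and>
     (\<forall>f\<in>smooth_funs M A. \<forall>X\<in>vector_fields M A. \<forall>X'\<in>vector_fields M A. \<forall>Y\<in>vector_fields M A.
        g (vf_add (vf_scale f X) X') Y = (\<lambda>p. f p * g X Y p + g X' Y p))"

type_synonym 'a form1 = "'a vf \<Rightarrow> 'a \<Rightarrow> real"

definition smooth_1forms :: "'a set \<Rightarrow> ('a set \<times> ('a \<Rightarrow> 'e::euclidean_space)) set \<Rightarrow> 'a form1 set" where
  "smooth_1forms M A = {\<omega>.
     (\<forall>X\<in>vector_fields M A. \<omega> X \<in> smooth_funs M A) \<and>
     (\<forall>f\<in>smooth_funs M A. \<forall>X\<in>vector_fields M A. \<forall>X'\<in>vector_fields M A.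
        \<omega> (vf_add (vf_scale f X) X') = (\<lambda>p. f p * \<omega> X p + \<omega> X' p))}"

text \<open>omega_p lies in the radical-annihilator T^bullet_p M, i.e. omega_p = u^flat for some
  u in T_p M (realised as the value at p of a vector field).\<close>
definition in_annih_at :: "'a set \<Rightarrow> ('a set \<times> ('a \<Rightarrow> 'e::euclidean_space)) set \<Rightarrow>
    ('a vf \<Rightarrow> 'a vf \<Rightarrow> 'a \<Rightarrow> real) \<Rightarrow> 'a form1 \<Rightarrow> 'a \<Rightarrow> bool" where
  "in_annih_at M A g \<omega> p \<longleftrightarrow> (\<exists>U\<in>vector_fields M A. \<forall>Y\<in>vector_fields M A. \<omega> Y p = g U Y p)"

definition annih_forms :: "'a set \<Rightarrow> ('a set \<times> ('a \<Rightarrow> 'e::euclidean_space)) set \<Rightarrow>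
    ('a vf \<Rightarrow> 'a vf \<Rightarrow> 'a \<Rightarrow> real) \<Rightarrow> 'a form1 set" where
  "annih_forms M A g = {\<omega>\<in>smooth_1forms M A. \<forall>p\<in>M. in_annih_at M A g \<omega> p}"

text \<open>The inner product on T^bullet_p M: for omega_p = u^flat, tau_p = v^flat, it is g(u,v).\<close>
definition annih_inner :: "'a set \<Rightarrow> ('a set \<times> ('a \<Rightarrow> 'e::euclidean_space)) set \<Rightarrow>
    ('a vf \<Rightarrow> 'a vf \<Rightarrow> 'a \<Rightarrow> real) \<Rightarrow> 'a form1 \<Rightarrow> 'a form1 \<Rightarrow> 'a \<Rightarrow> real" where
  "annih_inner M A g \<omega> \<tau> p =
     g (SOME U. U \<in> vector_fields M A \<and> (\<forall>Y\<in>vector_fields M A. \<omega> Y p = g U Y p))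
       (SOME V. V \<in> vector_fields M A \<and> (\<forall>Y\<in>vector_fields M A. \<tau> Y p = g V Y p)) p"

definition koszul :: "('a vf \<Rightarrow> 'a vf \<Rightarrow> 'a \<Rightarrow> real) \<Rightarrow> 'a vf \<Rightarrow> 'a vf \<Rightarrow> 'a vf \<Rightarrow> 'a \<Rightarrow> real" where
  "koszul g X Y Z = (\<lambda>p. (1/2) * (X (g Y Z) p + Y (g Z X) p - Z (g X Y) p
      - g X (lie_bracket Y Z) p + g Y (lie_bracket Z X) p + g Z (lie_bracket X Y) p))"

definition lower_nabla :: "('a vf \<Rightarrow> 'a vf \<Rightarrow> 'a \<Rightarrow> real) \<Rightarrow> 'a vf \<Rightarrow> 'a vf \<Rightarrow> 'a form1" where
  "lower_nabla g X Y = (\<lambda>Z. koszul g X Y Z)"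

definition radical_stationary :: "'a set \<Rightarrow> ('a set \<times> ('a \<Rightarrow> 'e::euclidean_space)) set \<Rightarrow>
    ('a vf \<Rightarrow> 'a vf \<Rightarrow> 'a \<Rightarrow> real) \<Rightarrow> bool" where
  "radical_stationary M A g \<longleftrightarrow>
     (\<forall>X\<in>vector_fields M A. \<forall>Y\<in>vector_fields M A. lower_nabla g X Y \<in> annih_forms M A g)"

definition cov_deriv :: "'a set \<Rightarrow> ('a set \<times> ('a \<Rightarrow> 'e::euclidean_space)) set \<Rightarrow>
    ('a vf \<Rightarrow> 'a vf \<Rightarrow> 'a \<Rightarrow> real) \<Rightarrow> 'a vf \<Rightarrow> 'a form1 \<Rightarrow> 'a form1" where
  "cov_deriv M A g X \<omega> = (\<lambda>Y p. if p \<in> M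
      then X (\<omega> Y) p - annih_inner M A g (lower_nabla g X Y) \<omega> p else 0)"

definition annih_d_forms :: "'a set \<Rightarrow> ('a set \<times> ('a \<Rightarrow> 'e::euclidean_space)) set \<Rightarrow>
    ('a vf \<Rightarrow> 'a vf \<Rightarrow> 'a \<Rightarrow> real) \<Rightarrow> 'a form1 set" where
  "annih_d_forms M A g = {\<omega>\<in>annih_forms M A g.
      \<forall>X\<in>vector_fields M A. cov_deriv M A g X \<omega> \<in> annih_forms M A g}"

definition semi_regular :: "'a set \<Rightarrow> ('a set \<times> ('a \<Rightarrow> 'e::euclidean_space)) set \<Rightarrow>
    ('a vf \<Rightarrow> 'a vf \<Rightarrow> 'a \<Rightarrow> real) \<Rightarrow> bool" where
  "semi_regular M A g \<longleftrightarrow>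
     (\<forall>X\<in>vector_fields M A. \<forall>Y\<in>vector_fields M A. lower_nabla g X Y \<in> annih_d_forms M A g)"

definition riemann :: "'a set \<Rightarrow> ('a set \<times> ('a \<Rightarrow> 'e::euclidean_space)) set \<Rightarrow>
    ('a vf \<Rightarrow> 'a vf \<Rightarrow> 'a \<Rightarrow> real) \<Rightarrow> 'a vf \<Rightarrow> 'a vf \<Rightarrow> 'a vf \<Rightarrow> 'a vf \<Rightarrow> 'a \<Rightarrow> real" where
  "riemann M A g X Y Z T = (\<lambda>p.
      cov_deriv M A g X (lower_nabla g Y Z) T p
    - cov_deriv M A g Y (lower_nabla g X Z) T p
    - lower_nabla g (lie_bracket X Y) Z T p)"

end

theory Submission
  imports Defs
begin


inductive_set polys :: "'e::euclidean_space set \<Rightarrow> ('e \<Rightarrow> real) set" for S where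
  pbase: "smooth_on S f \<Longrightarrow> f \<in> polys S"
| pconst: "(\<lambda>x. c) \<in> polys S"
| padd: "f \<in> polys S \<Longrightarrow> h \<in> polys S \<Longrightarrow> (\<lambda>x. f x + h x) \<in> polys S"
| pmult: "f \<in> polys S \<Longrightarrow> h \<in> polys S \<Longrightarrow> (\<lambda>x. f x * h x) \<in> polys S"

lemma smooth_on_coinduct2:
  assumes "P x"
    and "\<And>f. P f \<Longrightarrow> continuous_on S f \<and>
         (\<forall>i\<in>Basis. \<exists>f'. (\<forall>x\<in>S. ((\<lambda>t. f (x + t *\<^sub>R i)) has_real_derivative f' x) (at 0)) \<and>
                  (P f' \<or> smooth_on S f'))"
  shows "smooth_on S x"
  using assms(1) by (rule smooth_on.coinduct) (use assms(2) in blast)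

lemma smooth_on_cont: "smooth_on S f \<Longrightarrow> continuous_on S f"
  by (erule smooth_on.cases) auto

lemma polys_cont: "f \<in> polys S \<Longrightarrow> continuous_on S f"
  by (induction rule: polys.induct) (auto intro: smooth_on_cont continuous_intros)

lemma polys_deriv:
  assumes "f \<in> polys S" "i \<in> Basis"
  shows "\<exists>f'. (\<forall>x\<in>S. ((\<lambda>t. f (x + t *\<^sub>R i)) has_real_derivative f' x) (at 0)) \<and> f' \<in> polys S"
  using assms(1)
proof (induction rule: polys.induct)
  case (pbase f)
  then show ?case using assms(2) by (auto elim!: smooth_on.cases) (meson polys.pbase)
next
  case (pconst c)
  show ?case by (rule exI[of _ "\<lambda>x. 0"]) (auto intro: polys.pconst)
next
  case (padd f h)
  then obtain f1 h1 where f1: "\<forall>x\<in>S. ((\<lambda>t. f (x + t *\<^sub>R i)) has_real_derivative f1 x) (at 0)" "f1 \<in> polys S"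
    and h1: "\<forall>x\<in>S. ((\<lambda>t. h (x + t *\<^sub>R i)) has_real_derivative h1 x) (at 0)" "h1 \<in> polys S" by blast
  show ?case
    by (rule exI[of _ "\<lambda>x. f1 x + h1 x"]) (use f1 h1 in \<open>auto intro: polys.padd DERIV_add\<close>)
next
  case (pmult f h)
  then obtain f1 h1 where f1: "\<forall>x\<in>S. ((\<lambda>t. f (x + t *\<^sub>R i)) has_real_derivative f1 x) (at 0)" "f1 \<in> polys S"
    and h1: "\<forall>x\<in>S. ((\<lambda>t. h (x + t *\<^sub>R i)) has_real_derivative h1 x) (at 0)" "h1 \<in> polys S" by blast
  show ?case
  proof (rule exI[of _ "\<lambda>x. f1 x * h x + h1 x * f x"], intro conjI ballI)
    fix x assume "x \<in> S"
    from DERIV_mult[OF f1(1)[rule_format, OF this] h1(1)[rule_format, OF this]]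
    show "((\<lambda>t. f (x + t *\<^sub>R i) * h (x + t *\<^sub>R i)) has_real_derivative f1 x * h x + h1 x * f x) (at 0)"
      by simp
  qed (use f1 h1 pmult in \<open>auto intro: polys.padd polys.pmult\<close>)
qed

lemma polys_smooth: "f \<in> polys S \<Longrightarrow> smooth_on S f"
  apply (erule smooth_on_coinduct2)
  using polys_cont polys_deriv by blast

lemma smooth_on_ext:
  fixes S :: "'e::euclidean_space set"
  assumes "open S" "smooth_on S f" "\<forall>x\<in>S. f x = h x"
  shows "smooth_on S h"
proof -
  have "\<exists>f. smooth_on S f \<and> (\<forall>x\<in>S. f x = h x)" using assms by blast
  then show ?thesis
  proof (rule smooth_on_coinduct2)
  fix h assume "\<exists>f. smooth_on S f \<and> (\<forall>x\<in>S. f x = h x)"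
  then obtain f where smooth_on: "smooth_on S f" "\<forall>x\<in>S. f x = h x" by blast
  have c: "continuous_on S h" using smooth_on_cont[OF smooth_on(1)] smooth_on(2)
    using continuous_on_cong by blast
  show "continuous_on S h \<and> (\<forall>i\<in>Basis. \<exists>f'. (\<forall>x\<in>S. ((\<lambda>t. h (x + t *\<^sub>R i)) has_real_derivative f' x) (at 0)) \<and>
         ((\<exists>f. smooth_on S f \<and> (\<forall>x\<in>S. f x = f' x)) \<or> smooth_on S f'))"
  proof (intro conjI c ballI)
    fix i :: 'e assume i: "i \<in> Basis"
    from smooth_on(1) i obtain f' where f': "\<forall>x\<in>S. ((\<lambda>t. f (x + t *\<^sub>R i)) has_real_derivative f' x) (at 0)" "smooth_on S f'"
      by (auto elim!: smooth_on.cases) blast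
    have "\<forall>x\<in>S. ((\<lambda>t. h (x + t *\<^sub>R i)) has_real_derivative f' x) (at 0)"
    proof
      fix x assume x: "x \<in> S"
      let ?T = "{t::real. x + t *\<^sub>R i \<in> S}"
      have "open ?T"
        using open_vimage[OF assms(1), of "\<lambda>t. x + t *\<^sub>R i"] by (simp add: vimage_def continuous_on_add continuous_on_const continuous_on_scaleR continuous_on_id)
      moreover have "0 \<in> ?T" using x by simp
      ultimately show "((\<lambda>t. h (x + t *\<^sub>R i)) has_real_derivative f' x) (at 0)"
        using has_field_derivative_transform_within_open[OF f'(1)[rule_format, OF x], of ?T "\<lambda>t. h (x + t *\<^sub>R i)"] smooth_on(2) by auto
    qed
    then show "\<exists>f'. (\<forall>x\<in>S. ((\<lambda>t. h (x + t *\<^sub>R i)) has_real_derivative f' x) (at 0)) \<and>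
         ((\<exists>f. smooth_on S f \<and> (\<forall>x\<in>S. f x = f' x)) \<or> smooth_on S f')"
      using f'(2) by blast
  qed
  qed
qed


locale sr =
  fixes M :: "'a set" and A :: "('a set \<times> ('a \<Rightarrow> 'e::euclidean_space)) set"
    and g :: "'a vf \<Rightarrow> 'a vf \<Rightarrow> 'a \<Rightarrow> real"
  assumes man: "smooth_manifold M A"
    and sym: "smooth_sym_form M A g"
    and semi: "semi_regular M A g"
begin

abbreviation "SF \<equiv> smooth_funs M A"
abbreviation "VF \<equiv> vector_fields M A"

lemma chart: "(U,\<phi>) \<in> A \<Longrightarrow> U \<subseteq> M \<and> open (\<phi> ` U)"
  using man unfolding smooth_manifold_def smooth_atlas_def by blast

lemma sf_I: "(\<And>U \<phi>. (U,\<phi>) \<in> A \<Longrightarrow> smooth_on (\<phi> ` U) (F \<circ> inv_into U \<phi>)) \<Longrightarrow>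
   (\<And>p. p \<notin> M \<Longrightarrow> F p = 0) \<Longrightarrow> F \<in> SF"
  unfolding smooth_funs_def by blast

lemma sf_D: "F \<in> SF \<Longrightarrow> (U,\<phi>) \<in> A \<Longrightarrow> F \<circ> inv_into U \<phi> \<in> polys (\<phi> ` U)"
  unfolding smooth_funs_def by (blast intro: polys.pbase)

lemma sf_out: "f \<in> SF \<Longrightarrow> p \<notin> M \<Longrightarrow> f p = 0"
  unfolding smooth_funs_def by auto

lemma sf_mult[simp]: "f \<in> SF \<Longrightarrow> h \<in> SF \<Longrightarrow> (\<lambda>p. f p * h p) \<in> SF"
proof (rule sf_I)
  fix U \<phi> assume f: "f \<in> SF" and h: "h \<in> SF" and u: "(U,\<phi>) \<in> A"
  have "(\<lambda>x. (f \<circ> inv_into U \<phi>) x * (h \<circ> inv_into U \<phi>) x) \<in> polys (\<phi> ` U)"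
    by (rule polys.pmult[OF sf_D[OF f u] sf_D[OF h u]])
  then show "smooth_on (\<phi> ` U) ((\<lambda>p. f p * h p) \<circ> inv_into U \<phi>)"
    by (simp add: comp_def polys_smooth)
qed (simp add: sf_out)

lemma sf_comb[simp]: "f \<in> SF \<Longrightarrow> h \<in> SF \<Longrightarrow> (\<lambda>p. a * f p + b * h p) \<in> SF"
proof (rule sf_I)
  fix U \<phi> assume f: "f \<in> SF" and h: "h \<in> SF" and u: "(U,\<phi>) \<in> A"
  have "(\<lambda>x. (\<lambda>x. a) x * (f \<circ> inv_into U \<phi>) x + (\<lambda>x. b) x * (h \<circ> inv_into U \<phi>) x) \<in> polys (\<phi> ` U)"
    by (rule polys.padd polys.pmult polys.pconst sf_D[OF f u] sf_D[OF h u])+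
  then show "smooth_on (\<phi> ` U) ((\<lambda>p. a * f p + b * h p) \<circ> inv_into U \<phi>)"
    by (simp add: comp_def polys_smooth)
qed (simp add: sf_out)

lemma sf_add[simp]: "f \<in> SF \<Longrightarrow> h \<in> SF \<Longrightarrow> (\<lambda>p. f p + h p) \<in> SF"
  using sf_comb[of f h 1 1] by simp

lemma sf_diff[simp]: "f \<in> SF \<Longrightarrow> h \<in> SF \<Longrightarrow> (\<lambda>p. f p - h p) \<in> SF"
  using sf_comb[of f h 1 "-1"] by simp

lemma sf_neg[simp]: "f \<in> SF \<Longrightarrow> (\<lambda>p. - f p) \<in> SF"
  using sf_comb[of f f "-1" 0] by simp

lemma sf_zero[simp]: "(\<lambda>p. 0) \<in> SF"
  by (rule sf_I) (simp_all add: comp_def polys_smooth polys.pconst)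

definition one_M :: "'a \<Rightarrow> real" where "one_M = (\<lambda>p. if p \<in> M then 1 else 0)"

lemma sf_one[simp]: "one_M \<in> SF"
  unfolding smooth_funs_def
proof (safe)
  fix U \<phi> assume u: "(U,\<phi>) \<in> A"
  show "smooth_on (\<phi> ` U) (one_M \<circ> inv_into U \<phi>)"
  proof (rule smooth_on_ext[of _ "\<lambda>x. 1"])
    show "open (\<phi> ` U)" using chart[OF u] by blast
    show "smooth_on (\<phi> ` U) (\<lambda>x. 1)" by (rule polys_smooth) (rule polys.pconst)
    show "\<forall>x\<in>\<phi> ` U. 1 = (one_M \<circ> inv_into U \<phi>) x"
    proof
      fix x assume "x \<in> \<phi> ` U"
      hence "inv_into U \<phi> x \<in> U" by (rule inv_into_into)
      hence "inv_into U \<phi> x \<in> M" using chart[OF u] by blast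
      thus "1 = (one_M \<circ> inv_into U \<phi>) x" by (simp add: one_M_def)
    qed
  qed
qed (auto simp: one_M_def)


lemma vf_sf[simp]: "X \<in> VF \<Longrightarrow> f \<in> SF \<Longrightarrow> X f \<in> SF"
  unfolding vector_fields_def by auto

lemma vf_ns: "X \<in> VF \<Longrightarrow> f \<notin> SF \<Longrightarrow> X f = (\<lambda>_. 0)"
  unfolding vector_fields_def by auto

lemma vf_lin: "X \<in> VF \<Longrightarrow> f \<in> SF \<Longrightarrow> h \<in> SF \<Longrightarrow>
   X (\<lambda>p. a * f p + b * h p) = (\<lambda>p. a * X f p + b * X h p)"
  unfolding vector_fields_def by auto

lemma vf_leib_f: "X \<in> VF \<Longrightarrow> f \<in> SF \<Longrightarrow> h \<in> SF \<Longrightarrow>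
   X (\<lambda>p. f p * h p) = (\<lambda>p. f p * X h p + h p * X f p)"
  unfolding vector_fields_def by auto

lemma vf_leib: "X \<in> VF \<Longrightarrow> f \<in> SF \<Longrightarrow> h \<in> SF \<Longrightarrow>
   X (\<lambda>p. f p * h p) q = f q * X h q + h q * X f q"
  by (simp add: vf_leib_f)

lemma vf_add_f: "X \<in> VF \<Longrightarrow> f \<in> SF \<Longrightarrow> h \<in> SF \<Longrightarrow>
   X (\<lambda>p. f p + h p) = (\<lambda>p. X f p + X h p)"
  using vf_lin[of X f h 1 1] by simp

lemma vf_add: "X \<in> VF \<Longrightarrow> f \<in> SF \<Longrightarrow> h \<in> SF \<Longrightarrow>
   X (\<lambda>p. f p + h p) q = X f q + X h q"
  by (simp add: vf_add_f)

lemma vf_diff: "X \<in> VF \<Longrightarrow> f \<in> SF \<Longrightarrow> h \<in> SF \<Longrightarrow>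
   X (\<lambda>p. f p - h p) q = X f q - X h q"
  using vf_lin[of X f h 1 "-1"] by simp

lemma vf_zero_f: "X \<in> VF \<Longrightarrow> X (\<lambda>p. 0) = (\<lambda>p. 0)"
  using vf_lin[of X "\<lambda>p. 0" "\<lambda>p. 0" 0 0] by simp

lemma vf_zero: "X \<in> VF \<Longrightarrow> X (\<lambda>p. 0) q = 0"
  by (simp add: vf_zero_f)

lemma vf_out: "X \<in> VF \<Longrightarrow> q \<notin> M \<Longrightarrow> X h q = 0"
  by (cases "h \<in> SF") (auto simp: sf_out vf_ns)

lemma vf_comb_in[simp]: "f \<in> SF \<Longrightarrow> X \<in> VF \<Longrightarrow> X' \<in> VF \<Longrightarrow> vf_add (vf_scale f X) X' \<in> VF"
proof -
  assume f: "f \<in> SF" and X: "X \<in> VF" and X': "X' \<in> VF"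
  show ?thesis
    unfolding vector_fields_def vf_add_def vf_scale_def
  proof (intro CollectI conjI ballI allI impI)
    fix h assume "h \<in> SF" thus "(\<lambda>p. f p * X h p + X' h p) \<in> SF" using f X X' by simp
  next
    fix h assume "h \<notin> SF" thus "(\<lambda>p. f p * X h p + X' h p) = (\<lambda>_. 0)" using X X' by (simp add: vf_ns)
  next
    fix h1 h2 a b assume h1: "h1 \<in> SF" and h2: "h2 \<in> SF"
    have 1: "X (\<lambda>p. a * h1 p + b * h2 p) = (\<lambda>p. a * X h1 p + b * X h2 p)"
      and 2: "X' (\<lambda>p. a * h1 p + b * h2 p) = (\<lambda>p. a * X' h1 p + b * X' h2 p)"
      by (rule vf_lin[OF X h1 h2], rule vf_lin[OF X' h1 h2])
    show "(\<lambda>p. f p * X (\<lambda>p. a * h1 p + b * h2 p) p + X' (\<lambda>p. a * h1 p + b * h2 p) p) =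
          (\<lambda>p. a * (f p * X h1 p + X' h1 p) + b * (f p * X h2 p + X' h2 p))"
      unfolding 1 2 by (rule ext) algebra
  next
    fix h1 h2 assume h1: "h1 \<in> SF" and h2: "h2 \<in> SF"
    have 1: "X (\<lambda>p. h1 p * h2 p) = (\<lambda>p. h1 p * X h2 p + h2 p * X h1 p)"
      and 2: "X' (\<lambda>p. h1 p * h2 p) = (\<lambda>p. h1 p * X' h2 p + h2 p * X' h1 p)"
      by (rule vf_leib_f[OF X h1 h2], rule vf_leib_f[OF X' h1 h2])
    show "(\<lambda>p. f p * X (\<lambda>p. h1 p * h2 p) p + X' (\<lambda>p. h1 p * h2 p) p) =
       (\<lambda>p. h1 p * (f p * X h2 p + X' h2 p) + h2 p * (f p * X h1 p + X' h1 p))"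
      unfolding 1 2 by (rule ext) algebra
  qed
qed

lemma br_in[simp]: "X \<in> VF \<Longrightarrow> Y \<in> VF \<Longrightarrow> lie_bracket X Y \<in> VF"
proof -
  assume X: "X \<in> VF" and Y: "Y \<in> VF"
  show ?thesis
    unfolding vector_fields_def lie_bracket_def
  proof (intro CollectI conjI ballI allI impI)
    fix h assume "h \<in> SF" thus "(\<lambda>p. X (Y h) p - Y (X h) p) \<in> SF" using X Y by simp
  next
    fix h assume "h \<notin> SF" thus "(\<lambda>p. X (Y h) p - Y (X h) p) = (\<lambda>_. 0)"
      using X Y by (simp add: vf_ns vf_zero_f[OF X] vf_zero_f[OF Y])
  next
    fix h1 h2 a b assume h1: "h1 \<in> SF" and h2: "h2 \<in> SF"
    show "(\<lambda>p. X (Y (\<lambda>p. a * h1 p + b * h2 p)) p - Y (X (\<lambda>p. a * h1 p + b * h2 p)) p) =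
          (\<lambda>p. a * (X (Y h1) p - Y (X h1) p) + b * (X (Y h2) p - Y (X h2) p))"
      unfolding vf_lin[OF X h1 h2] vf_lin[OF Y h1 h2]
        vf_lin[OF X vf_sf[OF Y h1] vf_sf[OF Y h2]] vf_lin[OF Y vf_sf[OF X h1] vf_sf[OF X h2]]
      by (rule ext) algebra
  next
    fix h1 h2 assume h1: "h1 \<in> SF" and h2: "h2 \<in> SF"
    show "(\<lambda>p. X (Y (\<lambda>p. h1 p * h2 p)) p - Y (X (\<lambda>p. h1 p * h2 p)) p) =
       (\<lambda>p. h1 p * (X (Y h2) p - Y (X h2) p) + h2 p * (X (Y h1) p - Y (X h1) p))"
      unfolding vf_leib_f[OF X h1 h2] vf_leib_f[OF Y h1 h2]
        vf_add_f[OF X sf_mult[OF h1 vf_sf[OF Y h2]] sf_mult[OF h2 vf_sf[OF Y h1]]]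
        vf_add_f[OF Y sf_mult[OF h1 vf_sf[OF X h2]] sf_mult[OF h2 vf_sf[OF X h1]]]
        vf_leib_f[OF X h1 vf_sf[OF Y h2]] vf_leib_f[OF X h2 vf_sf[OF Y h1]]
        vf_leib_f[OF Y h1 vf_sf[OF X h2]] vf_leib_f[OF Y h2 vf_sf[OF X h1]]
      by (rule ext) algebra
  qed
qed

definition zvf :: "'a vf" where "zvf = (\<lambda>h p. 0)"

lemma zvf_in[simp]: "zvf \<in> VF"
  unfolding vector_fields_def zvf_def by auto

lemma br_left: "f \<in> SF \<Longrightarrow> X \<in> VF \<Longrightarrow> X' \<in> VF \<Longrightarrow> Y \<in> VF \<Longrightarrow>
  lie_bracket (vf_add (vf_scale f X) X') Y =
    vf_add (vf_scale f (lie_bracket X Y)) (vf_add (vf_scale (\<lambda>p. - Y f p) X) (lie_bracket X' Y))"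
  apply (rule ext)+
  subgoal for h p
    apply (cases "h \<in> SF")
     apply (simp add: lie_bracket_def vf_add_def vf_scale_def vf_add[of Y] vf_leib[of Y])
     apply algebra
    apply (simp add: vf_ns lie_bracket_def vf_add_def vf_scale_def vf_zero_f)
    done
  done

lemma br_right: "f \<in> SF \<Longrightarrow> X \<in> VF \<Longrightarrow> X' \<in> VF \<Longrightarrow> Y \<in> VF \<Longrightarrow>
  lie_bracket Y (vf_add (vf_scale f X) X') =
    vf_add (vf_scale f (lie_bracket Y X)) (vf_add (vf_scale (Y f) X) (lie_bracket Y X'))"
  apply (rule ext)+
  subgoal for h p
    apply (cases "h \<in> SF")
     apply (simp add: lie_bracket_def vf_add_def vf_scale_def vf_add[of Y] vf_leib[of Y])
     apply algebra
    apply (simp add: vf_ns lie_bracket_def vf_add_def vf_scale_def vf_zero_f)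
    done
  done

lemma g_sf[simp]: "X \<in> VF \<Longrightarrow> Y \<in> VF \<Longrightarrow> g X Y \<in> SF"
  using sym unfolding smooth_sym_form_def by blast

lemma g_sym: "X \<in> VF \<Longrightarrow> Y \<in> VF \<Longrightarrow> g X Y = g Y X"
  using sym unfolding smooth_sym_form_def by blast

lemma g_lin1_f: "f \<in> SF \<Longrightarrow> X \<in> VF \<Longrightarrow> X' \<in> VF \<Longrightarrow> Y \<in> VF \<Longrightarrow>
   g (vf_add (vf_scale f X) X') Y = (\<lambda>p. f p * g X Y p + g X' Y p)"
  using sym unfolding smooth_sym_form_def by blast

lemma g_lin1: "f \<in> SF \<Longrightarrow> X \<in> VF \<Longrightarrow> X' \<in> VF \<Longrightarrow> Y \<in> VF \<Longrightarrow>
   g (vf_add (vf_scale f X) X') Y q = f q * g X Y q + g X' Y q"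
  by (simp add: g_lin1_f)

lemma g_lin2_f: "f \<in> SF \<Longrightarrow> X \<in> VF \<Longrightarrow> X' \<in> VF \<Longrightarrow> Y \<in> VF \<Longrightarrow>
   g Y (vf_add (vf_scale f X) X') = (\<lambda>p. f p * g Y X p + g Y X' p)"
  using g_lin1_f[of f X X' Y] g_sym[of Y "vf_add (vf_scale f X) X'"] g_sym[of Y X] g_sym[of Y X'] by simp

lemma g_lin2: "f \<in> SF \<Longrightarrow> X \<in> VF \<Longrightarrow> X' \<in> VF \<Longrightarrow> Y \<in> VF \<Longrightarrow>
   g Y (vf_add (vf_scale f X) X') q = f q * g Y X q + g Y X' q"
  by (simp add: g_lin2_f)

lemma g_zvf: "Y \<in> VF \<Longrightarrow> g zvf Y q = 0"
proof (cases "q \<in> M")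
  case True
  assume Y: "Y \<in> VF"
  have "vf_add (vf_scale one_M zvf) zvf = zvf" by (auto simp: vf_add_def vf_scale_def zvf_def)
  then have "g zvf Y q = one_M q * g zvf Y q + g zvf Y q"
    using g_lin1[of one_M zvf zvf Y q] Y by simp
  thus ?thesis using True by (simp add: one_M_def)
next
  case False
  assume "Y \<in> VF" thus ?thesis using False sf_out[of "g zvf Y"] by simp
qed

lemma g_br_anti: "X \<in> VF \<Longrightarrow> Y \<in> VF \<Longrightarrow> V \<in> VF \<Longrightarrow>
   g V (lie_bracket Y X) q = - g V (lie_bracket X Y) q"
proof (cases "q \<in> M")
  case True
  assume X: "X \<in> VF" and Y: "Y \<in> VF" and V: "V \<in> VF"
  have "vf_add (vf_scale one_M (lie_bracket X Y)) (lie_bracket Y X) = zvf"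
    apply (rule ext)+
    subgoal for h p
      using X Y by (cases "p \<in> M") (auto simp: vf_add_def vf_scale_def zvf_def one_M_def lie_bracket_def vf_out)
    done
  then have "0 = one_M q * g V (lie_bracket X Y) q + g V (lie_bracket Y X) q"
    using g_lin2[of one_M "lie_bracket X Y" "lie_bracket Y X" V q] g_zvf[of V q] g_sym[of V zvf] X Y V by simp
  thus ?thesis using True by (simp add: one_M_def)
next
  case False
  assume "X \<in> VF" "Y \<in> VF" "V \<in> VF" thus ?thesis using False sf_out[of "g V _" q] by simp
qed

end

context sr begin

lemma nab_d: "X \<in> VF \<Longrightarrow> Y \<in> VF \<Longrightarrow> lower_nabla g X Y \<in> annih_d_forms M A g"
  using semi unfolding semi_regular_def by blast

lemma nab_an: "X \<in> VF \<Longrightarrow> Y \<in> VF \<Longrightarrow> lower_nabla g X Y \<in> annih_forms M A g"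
  using nab_d unfolding annih_d_forms_def by blast

lemma cd_an: "X \<in> VF \<Longrightarrow> Y \<in> VF \<Longrightarrow> Z \<in> VF \<Longrightarrow> cov_deriv M A g Z (lower_nabla g X Y) \<in> annih_forms M A g"
  using nab_d[of X Y] unfolding annih_d_forms_def by blast

lemma an_1f: "\<omega> \<in> annih_forms M A g \<Longrightarrow> \<omega> \<in> smooth_1forms M A"
  unfolding annih_forms_def by blast

lemma f1_sf: "\<omega> \<in> smooth_1forms M A \<Longrightarrow> X \<in> VF \<Longrightarrow> \<omega> X \<in> SF"
  unfolding smooth_1forms_def by blast

lemma f1_lin: "\<omega> \<in> smooth_1forms M A \<Longrightarrow> f \<in> SF \<Longrightarrow> X \<in> VF \<Longrightarrow> X' \<in> VF \<Longrightarrow>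
   \<omega> (vf_add (vf_scale f X) X') q = f q * \<omega> X q + \<omega> X' q"
  unfolding smooth_1forms_def by auto

lemma K_sf[simp]: "X \<in> VF \<Longrightarrow> Y \<in> VF \<Longrightarrow> Z \<in> VF \<Longrightarrow> koszul g X Y Z \<in> SF"
  using f1_sf[OF an_1f[OF nab_an[of X Y]], of Z] by (simp add: lower_nabla_def)

lemma K3: "f \<in> SF \<Longrightarrow> X \<in> VF \<Longrightarrow> Y \<in> VF \<Longrightarrow> Z \<in> VF \<Longrightarrow> Z' \<in> VF \<Longrightarrow>
   koszul g X Y (vf_add (vf_scale f Z) Z') q = f q * koszul g X Y Z q + koszul g X Y Z' q"
  using f1_lin[OF an_1f[OF nab_an[of X Y]], of f Z Z' q] by (simp add: lower_nabla_def)

definition wit :: "'a form1 \<Rightarrow> 'a \<Rightarrow> 'a vf" where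
  "wit \<omega> p = (SOME U. U \<in> VF \<and> (\<forall>Y\<in>VF. \<omega> Y p = g U Y p))"

lemma wit: "\<omega> \<in> annih_forms M A g \<Longrightarrow> p \<in> M \<Longrightarrow> wit \<omega> p \<in> VF \<and> (\<forall>Y\<in>VF. \<omega> Y p = g (wit \<omega> p) Y p)"
proof -
  assume "\<omega> \<in> annih_forms M A g" "p \<in> M"
  then have "\<exists>U. U \<in> VF \<and> (\<forall>Y\<in>VF. \<omega> Y p = g U Y p)"
    unfolding annih_forms_def in_annih_at_def by blast
  then show ?thesis unfolding wit_def by (rule someI_ex)
qed

lemma ai1: "\<alpha> \<in> annih_forms M A g \<Longrightarrow> \<omega> \<in> annih_forms M A g \<Longrightarrow> p \<in> M \<Longrightarrow>
   annih_inner M A g \<alpha> \<omega> p = \<alpha> (wit \<omega> p) p"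
proof -
  assume a: "\<alpha> \<in> annih_forms M A g" and w: "\<omega> \<in> annih_forms M A g" and p: "p \<in> M"
  have "annih_inner M A g \<alpha> \<omega> p = g (wit \<alpha> p) (wit \<omega> p) p"
    unfolding annih_inner_def wit_def ..
  also have "\<dots> = \<alpha> (wit \<omega> p) p" using wit[OF a p] wit[OF w p] by auto
  finally show ?thesis .
qed

lemma ai2: "\<alpha> \<in> annih_forms M A g \<Longrightarrow> \<omega> \<in> annih_forms M A g \<Longrightarrow> p \<in> M \<Longrightarrow>
   annih_inner M A g \<alpha> \<omega> p = \<omega> (wit \<alpha> p) p"
proof -
  assume a: "\<alpha> \<in> annih_forms M A g" and w: "\<omega> \<in> annih_forms M A g" and p: "p \<in> M"
  have "annih_inner M A g \<alpha> \<omega> p = g (wit \<alpha> p) (wit \<omega> p) p"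
    unfolding annih_inner_def wit_def ..
  also have "\<dots> = g (wit \<omega> p) (wit \<alpha> p) p" using wit[OF a p] wit[OF w p] g_sym by metis
  also have "\<dots> = \<omega> (wit \<alpha> p) p" using wit[OF a p] wit[OF w p] by auto
  finally show ?thesis .
qed

lemma wit_in[simp]: "X \<in> VF \<Longrightarrow> Y \<in> VF \<Longrightarrow> p \<in> M \<Longrightarrow> wit (lower_nabla g X Y) p \<in> VF"
  using wit[OF nab_an] by blast

lemma wit_g: "X \<in> VF \<Longrightarrow> Y \<in> VF \<Longrightarrow> p \<in> M \<Longrightarrow> Z \<in> VF \<Longrightarrow>
   g Z (wit (lower_nabla g X Y) p) p = koszul g X Y Z p"
  using wit[OF nab_an[of X Y] , of p] g_sym[of Z "wit (lower_nabla g X Y) p"]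
  by (simp add: lower_nabla_def)

lemma Kflip: "X \<in> VF \<Longrightarrow> Y \<in> VF \<Longrightarrow> Z \<in> VF \<Longrightarrow>
   koszul g X Y Z q + koszul g X Z Y q = X (g Y Z) q"
proof -
  assume X: "X \<in> VF" and Y: "Y \<in> VF" and Z: "Z \<in> VF"
  show ?thesis
    unfolding koszul_def g_sym[OF Z Y] g_sym[OF Y X] g_sym[OF X Z]
      g_br_anti[OF Y Z X] g_br_anti[OF X Y Z] g_br_anti[OF Z X Y]
    by (simp add: field_simps)
qed

lemma K1: "f \<in> SF \<Longrightarrow> X \<in> VF \<Longrightarrow> X' \<in> VF \<Longrightarrow> Y \<in> VF \<Longrightarrow> Z \<in> VF \<Longrightarrow>
   koszul g (vf_add (vf_scale f X) X') Y Z q = f q * koszul g X Y Z q + koszul g X' Y Z q"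
proof -
  assume f: "f \<in> SF" and X: "X \<in> VF" and X': "X' \<in> VF" and Y: "Y \<in> VF" and Z: "Z \<in> VF"
  define W where "W = vf_add (vf_scale f X) X'"
  have W: "W \<in> VF" using f X X' by (simp add: W_def)
  have a: "W (g Y Z) q = f q * X (g Y Z) q + X' (g Y Z) q"
    by (simp add: W_def vf_add_def vf_scale_def)
  have b0: "g Z W = (\<lambda>p. f p * g X Z p + g X' Z p)"
    using g_sym[OF Z W] g_lin1_f[OF f X X' Z] by (simp add: W_def)
  have b: "Y (g Z W) q = f q * Y (g X Z) q + g X Z q * Y f q + Y (g X' Z) q"
    unfolding b0 using f X X' Y Z by (simp add: vf_add[of Y] vf_leib[of Y])
  have c0: "g W Y = (\<lambda>p. f p * g X Y p + g X' Y p)"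
    using g_lin1_f[OF f X X' Y] by (simp add: W_def)
  have c: "Z (g W Y) q = f q * Z (g X Y) q + g X Y q * Z f q + Z (g X' Y) q"
    unfolding c0 using f X X' Y Z by (simp add: vf_add[of Z] vf_leib[of Z])
  have d: "g W (lie_bracket Y Z) q = f q * g X (lie_bracket Y Z) q + g X' (lie_bracket Y Z) q"
    using g_lin1[OF f X X', of "lie_bracket Y Z" q] Y Z by (simp add: W_def)
  have e: "g Y (lie_bracket Z W) q = f q * g Y (lie_bracket Z X) q + Z f q * g X Y q + g Y (lie_bracket Z X') q"
  proof -
    have "g Y (lie_bracket Z W) q = f q * g Y (lie_bracket Z X) q + (Z f q * g Y X q + g Y (lie_bracket Z X') q)"
      unfolding W_def br_right[OF f X X' Z]
      using f X X' Y Z by (simp add: g_lin2)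
    thus ?thesis using g_sym[OF X Y] by simp
  qed
  have e2: "g Z (lie_bracket W Y) q = f q * g Z (lie_bracket X Y) q - Y f q * g X Z q + g Z (lie_bracket X' Y) q"
  proof -
    have "g Z (lie_bracket W Y) q = f q * g Z (lie_bracket X Y) q + (- Y f q * g Z X q + g Z (lie_bracket X' Y) q)"
      unfolding W_def br_left[OF f X X' Y]
      using f X X' Y Z by (simp add: g_lin2)
    thus ?thesis using g_sym[OF X Z] by simp
  qed
  have "koszul g W Y Z q = f q * koszul g X Y Z q + koszul g X' Y Z q"
    unfolding koszul_def using a b c d e e2 g_sym[OF Z X] g_sym[OF Z X'] g_sym[OF X Y] g_sym[OF X' Y]
    by (simp add: field_simps)
  thus ?thesis by (simp add: W_def)
qed

lemma K2: "f \<in> SF \<Longrightarrow> X \<in> VF \<Longrightarrow> Y \<in> VF \<Longrightarrow> Y' \<in> VF \<Longrightarrow> Z \<in> VF \<Longrightarrow>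
   koszul g X (vf_add (vf_scale f Y) Y') Z q = f q * koszul g X Y Z q + X f q * g Y Z q + koszul g X Y' Z q"
proof -
  assume f: "f \<in> SF" and X: "X \<in> VF" and Y: "Y \<in> VF" and Y': "Y' \<in> VF" and Z: "Z \<in> VF"
  define W where "W = vf_add (vf_scale f Y) Y'"
  have W: "W \<in> VF" using f Y Y' by (simp add: W_def)
  have 1: "koszul g X W Z q = X (g W Z) q - koszul g X Z W q" using Kflip[OF X W Z, of q] by simp
  have g0: "g W Z = (\<lambda>p. f p * g Y Z p + g Y' Z p)"
    using g_lin1_f[OF f Y Y' Z] by (simp add: W_def)
  have 2: "X (g W Z) q = f q * X (g Y Z) q + g Y Z q * X f q + X (g Y' Z) q"
    unfolding g0 using f X Y Y' Z by (simp add: vf_add[of X] vf_leib[of X])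
  have 3: "koszul g X Z W q = f q * koszul g X Z Y q + koszul g X Z Y' q"
    unfolding W_def by (rule K3[OF f X Z Y Y'])
  have 4: "X (g Y Z) q = koszul g X Y Z q + koszul g X Z Y q" using Kflip[OF X Y Z, of q] by simp
  have 5: "X (g Y' Z) q = koszul g X Y' Z q + koszul g X Z Y' q" using Kflip[OF X Y' Z, of q] by simp
  show ?thesis
    unfolding W_def[symmetric] by (simp only: 1 2 3 4 5) (simp add: algebra_simps)
qed

end

context sr begin

abbreviation "K \<equiv> koszul g"
abbreviation "N \<equiv> lower_nabla g"

lemma nabK: "N X Y Z = K X Y Z" by (simp add: lower_nabla_def)

lemma riemA: "X \<in> VF \<Longrightarrow> Y \<in> VF \<Longrightarrow> Z \<in> VF \<Longrightarrow> T \<in> VF \<Longrightarrow> p \<in> M \<Longrightarrow>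
  riemann M A g X Y Z T p = X (K Y Z T) p - K Y Z (wit (N X T) p) p
     - (Y (K X Z T) p - K X Z (wit (N Y T) p) p) - K (lie_bracket X Y) Z T p"
  unfolding riemann_def cov_deriv_def
  by (simp add: ai2[OF nab_an nab_an] nabK)

lemma swapK: "X \<in> VF \<Longrightarrow> Y \<in> VF \<Longrightarrow> Z \<in> VF \<Longrightarrow> T \<in> VF \<Longrightarrow> p \<in> M \<Longrightarrow>
  K Y Z (wit (N X T) p) p = K X T (wit (N Y Z) p) p"
  using ai1[OF nab_an[of X T] nab_an[of Y Z], of p] ai2[OF nab_an[of X T] nab_an[of Y Z], of p]
  by (simp add: nabK)

lemma riemB: "X \<in> VF \<Longrightarrow> Y \<in> VF \<Longrightarrow> Z \<in> VF \<Longrightarrow> T \<in> VF \<Longrightarrow> p \<in> M \<Longrightarrow>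
  riemann M A g X Y Z T p = X (K Y Z T) p - K X T (wit (N Y Z) p) p
     - (Y (K X Z T) p - K X Z (wit (N Y T) p) p) - K (lie_bracket X Y) Z T p"
  using riemA swapK[of X Y Z T p] by simp

lemma riemC: "X \<in> VF \<Longrightarrow> Y \<in> VF \<Longrightarrow> Z \<in> VF \<Longrightarrow> T \<in> VF \<Longrightarrow> p \<in> M \<Longrightarrow>
  riemann M A g X Y Z T p = X (K Y Z T) p - K Y Z (wit (N X T) p) p
     - (Y (K X Z T) p - K Y T (wit (N X Z) p) p) - K (lie_bracket X Y) Z T p"
  using riemA swapK[of Y X Z T p] by simp

lemma linX: "f \<in> SF \<Longrightarrow> X \<in> VF \<Longrightarrow> X' \<in> VF \<Longrightarrow> Y \<in> VF \<Longrightarrow> Z \<in> VF \<Longrightarrow> T \<in> VF \<Longrightarrow> p \<in> M \<Longrightarrow>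
  riemann M A g (vf_add (vf_scale f X) X') Y Z T p = f p * riemann M A g X Y Z T p + riemann M A g X' Y Z T p"
proof -
  assume f: "f \<in> SF" and X: "X \<in> VF" and X': "X' \<in> VF" and Y: "Y \<in> VF" and Z: "Z \<in> VF" and T: "T \<in> VF" and p: "p \<in> M"
  define W where "W = vf_add (vf_scale f X) X'"
  have W: "W \<in> VF" using f X X' by (simp add: W_def)
  define V where "V = wit (N Y Z) p"
  define U where "U = wit (N Y T) p"
  have V: "V \<in> VF" and U: "U \<in> VF" using Y Z T p by (simp_all add: V_def U_def)
  have t1: "W (K Y Z T) p = f p * X (K Y Z T) p + X' (K Y Z T) p"
    by (simp add: W_def vf_add_def vf_scale_def)
  have t2: "K W T V p = f p * K X T V p + K X' T V p"
    unfolding W_def by (rule K1[OF f X X' T V])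
  have t30: "K W Z T = (\<lambda>q. f q * K X Z T q + K X' Z T q)"
    unfolding W_def by (rule ext) (rule K1[OF f X X' Z T])
  have t3: "Y (K W Z T) p = f p * Y (K X Z T) p + K X Z T p * Y f p + Y (K X' Z T) p"
    unfolding t30 using f X X' Y Z T by (simp add: vf_add[of Y] vf_leib[of Y])
  have t4: "K W Z U p = f p * K X Z U p + K X' Z U p"
    unfolding W_def by (rule K1[OF f X X' Z U])
  have nf: "(\<lambda>p. - Y f p) \<in> SF" using f Y by simp
  have t5: "K (lie_bracket W Y) Z T p = f p * K (lie_bracket X Y) Z T p - Y f p * K X Z T p + K (lie_bracket X' Y) Z T p"
    unfolding W_def br_left[OF f X X' Y]
    using K1[OF f br_in[OF X Y] vf_comb_in[OF nf X br_in[OF X' Y]] Z T, of p]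
      K1[OF nf X br_in[OF X' Y] Z T, of p] by simp
  have "riemann M A g W Y Z T p = f p * riemann M A g X Y Z T p + riemann M A g X' Y Z T p"
    unfolding riemB[OF W Y Z T p] riemB[OF X Y Z T p] riemB[OF X' Y Z T p]
    unfolding V_def[symmetric] U_def[symmetric] t1 t2 t3 t4 t5
    by (simp add: algebra_simps)
  thus ?thesis by (simp add: W_def)
qed

lemma linY: "f \<in> SF \<Longrightarrow> X \<in> VF \<Longrightarrow> Y \<in> VF \<Longrightarrow> Y' \<in> VF \<Longrightarrow> Z \<in> VF \<Longrightarrow> T \<in> VF \<Longrightarrow> p \<in> M \<Longrightarrow>
  riemann M A g X (vf_add (vf_scale f Y) Y') Z T p = f p * riemann M A g X Y Z T p + riemann M A g X Y' Z T p"
proof -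
  assume f: "f \<in> SF" and X: "X \<in> VF" and Y: "Y \<in> VF" and Y': "Y' \<in> VF" and Z: "Z \<in> VF" and T: "T \<in> VF" and p: "p \<in> M"
  define W where "W = vf_add (vf_scale f Y) Y'"
  have W: "W \<in> VF" using f Y Y' by (simp add: W_def)
  define U where "U = wit (N X T) p"
  define V where "V = wit (N X Z) p"
  have V: "V \<in> VF" and U: "U \<in> VF" using X Z T p by (simp_all add: V_def U_def)
  have t10: "K W Z T = (\<lambda>q. f q * K Y Z T q + K Y' Z T q)"
    unfolding W_def by (rule ext) (rule K1[OF f Y Y' Z T])
  have t1: "X (K W Z T) p = f p * X (K Y Z T) p + K Y Z T p * X f p + X (K Y' Z T) p"
    unfolding t10 using f X Y Y' Z T by (simp add: vf_add[of X] vf_leib[of X])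
  have t2: "K W Z U p = f p * K Y Z U p + K Y' Z U p"
    unfolding W_def by (rule K1[OF f Y Y' Z U])
  have t3: "W (K X Z T) p = f p * Y (K X Z T) p + Y' (K X Z T) p"
    by (simp add: W_def vf_add_def vf_scale_def)
  have t4: "K W T V p = f p * K Y T V p + K Y' T V p"
    unfolding W_def by (rule K1[OF f Y Y' T V])
  have xf: "X f \<in> SF" using f X by simp
  have t5: "K (lie_bracket X W) Z T p = f p * K (lie_bracket X Y) Z T p + X f p * K Y Z T p + K (lie_bracket X Y') Z T p"
    unfolding W_def br_right[OF f Y Y' X]
    using K1[OF f br_in[OF X Y] vf_comb_in[OF xf Y br_in[OF X Y']] Z T, of p]
      K1[OF xf Y br_in[OF X Y'] Z T, of p] by simp
  have "riemann M A g X W Z T p = f p * riemann M A g X Y Z T p + riemann M A g X Y' Z T p"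
    unfolding riemC[OF X W Z T p] riemC[OF X Y Z T p] riemC[OF X Y' Z T p]
    unfolding V_def[symmetric] U_def[symmetric] t1 t2 t3 t4 t5
    by (simp add: algebra_simps)
  thus ?thesis by (simp add: W_def)
qed

lemma linZ: "f \<in> SF \<Longrightarrow> X \<in> VF \<Longrightarrow> Y \<in> VF \<Longrightarrow> Z \<in> VF \<Longrightarrow> Z' \<in> VF \<Longrightarrow> T \<in> VF \<Longrightarrow> p \<in> M \<Longrightarrow>
  riemann M A g X Y (vf_add (vf_scale f Z) Z') T p = f p * riemann M A g X Y Z T p + riemann M A g X Y Z' T p"
proof -
  assume f: "f \<in> SF" and X: "X \<in> VF" and Y: "Y \<in> VF" and Z: "Z \<in> VF" and Z': "Z' \<in> VF" and T: "T \<in> VF" and p: "p \<in> M"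
  define W where "W = vf_add (vf_scale f Z) Z'"
  have W: "W \<in> VF" using f Z Z' by (simp add: W_def)
  define U where "U = wit (N X T) p"
  define V where "V = wit (N Y T) p"
  have V: "V \<in> VF" and U: "U \<in> VF" using X Y T p by (simp_all add: V_def U_def)
  have xf: "X f \<in> SF" and yf: "Y f \<in> SF" using f X Y by simp_all
  have gzt: "g Z T \<in> SF" using Z T by simp
  have t10: "K Y W T = (\<lambda>q. f q * K Y Z T q + Y f q * g Z T q + K Y Z' T q)"
    unfolding W_def by (rule ext) (rule K2[OF f Y Z Z' T])
  have t1: "X (K Y W T) p = f p * X (K Y Z T) p + K Y Z T p * X f p
      + (Y f p * X (g Z T) p + g Z T p * X (Y f) p) + X (K Y Z' T) p"
    unfolding t10 using f X Y Z Z' T yf gzt by (simp add: vf_add[of X] vf_leib[of X])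
  have t2: "K Y W U p = f p * K Y Z U p + Y f p * K X T Z p + K Y Z' U p"
    using K2[OF f Y Z Z' U, of p] wit_g[OF X T p Z] by (simp add: W_def U_def)
  have t30: "K X W T = (\<lambda>q. f q * K X Z T q + X f q * g Z T q + K X Z' T q)"
    unfolding W_def by (rule ext) (rule K2[OF f X Z Z' T])
  have t3: "Y (K X W T) p = f p * Y (K X Z T) p + K X Z T p * Y f p
      + (X f p * Y (g Z T) p + g Z T p * Y (X f) p) + Y (K X Z' T) p"
    unfolding t30 using f X Y Z Z' T xf gzt by (simp add: vf_add[of Y] vf_leib[of Y])
  have t4: "K X W V p = f p * K X Z V p + X f p * K Y T Z p + K X Z' V p"
    using K2[OF f X Z Z' V, of p] wit_g[OF Y T p Z] by (simp add: W_def V_def)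
  have t5: "K (lie_bracket X Y) W T p = f p * K (lie_bracket X Y) Z T p
      + (X (Y f) p - Y (X f) p) * g Z T p + K (lie_bracket X Y) Z' T p"
    unfolding W_def K2[OF f br_in[OF X Y] Z Z' T] by (simp add: lie_bracket_def)
  have fx: "X (g Z T) p = K X Z T p + K X T Z p" using Kflip[OF X Z T, of p] by simp
  have fy: "Y (g Z T) p = K Y Z T p + K Y T Z p" using Kflip[OF Y Z T, of p] by simp
  have "riemann M A g X Y W T p = f p * riemann M A g X Y Z T p + riemann M A g X Y Z' T p"
    unfolding riemA[OF X Y W T p] riemA[OF X Y Z T p] riemA[OF X Y Z' T p]
    unfolding V_def[symmetric] U_def[symmetric] t1 t2 t3 t4 t5 fx fy
    by (simp add: algebra_simps)
  thus ?thesis by (simp add: W_def)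
qed

lemma linT: "f \<in> SF \<Longrightarrow> X \<in> VF \<Longrightarrow> Y \<in> VF \<Longrightarrow> Z \<in> VF \<Longrightarrow> T \<in> VF \<Longrightarrow> T' \<in> VF \<Longrightarrow>
  riemann M A g X Y Z (vf_add (vf_scale f T) T') p = f p * riemann M A g X Y Z T p + riemann M A g X Y Z T' p"
proof -
  assume f: "f \<in> SF" and X: "X \<in> VF" and Y: "Y \<in> VF" and Z: "Z \<in> VF" and T: "T \<in> VF" and T': "T' \<in> VF"
  show ?thesis
    unfolding riemann_def
      f1_lin[OF an_1f[OF cd_an[OF Y Z X]] f T T'] f1_lin[OF an_1f[OF cd_an[OF X Z Y]] f T T']
      f1_lin[OF an_1f[OF nab_an[OF br_in[OF X Y] Z]] f T T']
    by (simp add: algebra_simps)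
qed

lemma riem_sf: "X \<in> VF \<Longrightarrow> Y \<in> VF \<Longrightarrow> Z \<in> VF \<Longrightarrow> T \<in> VF \<Longrightarrow> riemann M A g X Y Z T \<in> SF"
proof -
  assume X: "X \<in> VF" and Y: "Y \<in> VF" and Z: "Z \<in> VF" and T: "T \<in> VF"
  have a: "cov_deriv M A g X (N Y Z) T \<in> SF" by (rule f1_sf[OF an_1f[OF cd_an[OF Y Z X]] T])
  have b: "cov_deriv M A g Y (N X Z) T \<in> SF" by (rule f1_sf[OF an_1f[OF cd_an[OF X Z Y]] T])
  have c: "N (lie_bracket X Y) Z T \<in> SF" by (rule f1_sf[OF an_1f[OF nab_an[OF br_in[OF X Y] Z]] T])
  show ?thesis unfolding riemann_def by (rule sf_diff[OF sf_diff[OF a b] c])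
qed

end

theorem theorem7p5:
  fixes M :: "'a set" and A :: "('a set \<times> ('a \<Rightarrow> 'e::euclidean_space)) set"
    and g :: "'a vf \<Rightarrow> 'a vf \<Rightarrow> 'a \<Rightarrow> real"
  assumes "smooth_manifold M A"
    and "smooth_sym_form M A g"
    and "semi_regular M A g"
  shows "(\<forall>X\<in>vector_fields M A. \<forall>Y\<in>vector_fields M A. \<forall>Z\<in>vector_fields M A.
           \<forall>T\<in>vector_fields M A. riemann M A g X Y Z T \<in> smooth_funs M A) \<and>
        (\<forall>f\<in>smooth_funs M A. \<forall>X\<in>vector_fields M A. \<forall>X'\<in>vector_fields M A.
         \<forall>Y\<in>vector_fields M A. \<forall>Z\<in>vector_fields M A. \<forall>T\<in>vector_fields M A. \<forall>p\<in>M.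
           riemann M A g (vf_add (vf_scale f X) X') Y Z T p
             = f p * riemann M A g X Y Z T p + riemann M A g X' Y Z T p) \<and>
        (\<forall>f\<in>smooth_funs M A. \<forall>X\<in>vector_fields M A. \<forall>Y\<in>vector_fields M A.
         \<forall>Y'\<in>vector_fields M A. \<forall>Z\<in>vector_fields M A. \<forall>T\<in>vector_fields M A. \<forall>p\<in>M.
           riemann M A g X (vf_add (vf_scale f Y) Y') Z T p
             = f p * riemann M A g X Y Z T p + riemann M A g X Y' Z T p) \<and>
        (\<forall>f\<in>smooth_funs M A. \<forall>X\<in>vector_fields M A. \<forall>Y\<in>vector_fields M A.
         \<forall>Z\<in>vector_fields M A. \<forall>Z'\<in>vector_fields M A. \<forall>T\<in>vector_fields M A. \<forall>p\<in>M.
           riemann M A g X Y (vf_add (vf_scale f Z) Z') T p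
             = f p * riemann M A g X Y Z T p + riemann M A g X Y Z' T p) \<and>
        (\<forall>f\<in>smooth_funs M A. \<forall>X\<in>vector_fields M A. \<forall>Y\<in>vector_fields M A.
         \<forall>Z\<in>vector_fields M A. \<forall>T\<in>vector_fields M A. \<forall>T'\<in>vector_fields M A. \<forall>p\<in>M.
           riemann M A g X Y Z (vf_add (vf_scale f T) T') p
             = f p * riemann M A g X Y Z T p + riemann M A g X Y Z T' p)"
proof -
  interpret sr M A g by (rule sr.intro) (fact assms)+
  show ?thesis
    apply (intro conjI ballI)
        apply (rule riem_sf; assumption)
       apply (rule linX; assumption)
      apply (rule linY; assumption)
     apply (rule linZ; assumption)
    apply (rule linT; assumption)
    done
qed

end
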